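(* Let $\mathcal{H}$ be a hypergraph. Then $\mathcal{H}$ is a hypertree if and only if $Comp(\mathcal{H})$ is a hypertree. Moreover, $\mathcal{H}$ is a hypertree if and only if $\mathcal{B}(Comp(\mathcal{H}))$ is a hypertree.
   Context: A hypergraph $\mathcal{H}$ has a finite vertex set $V(\mathcal{H})$ and a finite family $E(\mathcal{H})$ (repetitions allowed) of nonempty subsets of $V(\mathcal{H})$ (edges). A host tree of $\mathcal{H}$ is a tree with vertex set $V(\mathcal{H})$ in which every edge of $\mathcal{H}$ induces a connected subgraph; $\mathcal{H}$ is a hypertree if it has a host tree. A union $\bigcup_{i=1}^n F_i$ is connected if the intersection graph of the sets $F_1,\dots,F_n$ is connected. The completion $Comp(\mathcal{H})$ is the hypergraph without repeated edges on vertex set $V(\mathcal{H})$ whose edges are $V(\mathcal{H})$, all one-element subsets of $V(\mathcal{H})$, and all proper subsets of $V(\mathcal{H})$ obtainable from edges of $\mathcal{H}$ by applying (in any order and amount) nonempty intersections and connected unions. For a hypergraph $\mathcal{K}$ whose edge set is closed under connected unions, its basis $\mathcal{B}(\mathcal{K})$ is the hypergraph without repeated edges on $V(\mathcal{K})$ whose edges are the edges of $\mathcal{K}$ with more than one vertex that cannot be expressed as a connected union of strictly smaller edges of $\mathcal{K}$. *)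

theory Defs
  imports Main "HOL-Library.Multiset"
begin

definition graph_edges :: "'a set \<Rightarrow> 'a set set \<Rightarrow> bool" where
  "graph_edges V T \<longleftrightarrow> (\<forall>e\<in>T. \<exists>u v. e = {u, v} \<and> u \<noteq> v \<and> u \<in> V \<and> v \<in> V)"

definition adj_in :: "'a set set \<Rightarrow> 'a set \<Rightarrow> ('a \<times> 'a) set" where
  "adj_in T S = {(x, y). {x, y} \<in> T \<and> x \<in> S \<and> y \<in> S}"

definition induces_connected :: "'a set set \<Rightarrow> 'a set \<Rightarrow> bool" where
  "induces_connected T S \<longleftrightarrow> (\<forall>x\<in>S. \<forall>y\<in>S. (x, y) \<in> (adj_in T S)\<^sup>*)"

definition is_cycle :: "'a set set \<Rightarrow> 'a list \<Rightarrow> bool" where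
  "is_cycle T xs \<longleftrightarrow> length xs \<ge> 3 \<and> distinct xs \<and>
     (\<forall>i. Suc i < length xs \<longrightarrow> {xs ! i, xs ! Suc i} \<in> T) \<and>
     {last xs, hd xs} \<in> T"

definition is_tree :: "'a set \<Rightarrow> 'a set set \<Rightarrow> bool" where
  "is_tree V T \<longleftrightarrow> graph_edges V T \<and> induces_connected T V \<and>
     \<not> (\<exists>xs. is_cycle T xs)"

definition host_tree :: "'a set \<Rightarrow> 'a set set \<Rightarrow> 'a set set \<Rightarrow> bool" where
  "host_tree V Es T \<longleftrightarrow> is_tree V T \<and> (\<forall>F\<in>Es. induces_connected T F)"

definition is_hypertree :: "'a set \<Rightarrow> 'a set set \<Rightarrow> bool" where
  "is_hypertree V Es \<longleftrightarrow> (\<exists>T. host_tree V Es T)"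

definition hypergraph :: "'a set \<Rightarrow> 'a set multiset \<Rightarrow> bool" where
  "hypergraph V E \<longleftrightarrow> finite V \<and> (\<forall>F\<in>#E. F \<noteq> {} \<and> F \<subseteq> V)"

definition connected_family :: "'a set set \<Rightarrow> bool" where
  "connected_family S \<longleftrightarrow>
     (\<forall>A\<in>S. \<forall>B\<in>S. (A, B) \<in> {(X, Y). X \<in> S \<and> Y \<in> S \<and> X \<inter> Y \<noteq> {}}\<^sup>*)"

inductive_set comp_gen :: "'a set multiset \<Rightarrow> 'a set set" for E where
  base: "F \<in># E \<Longrightarrow> F \<in> comp_gen E"
| inter: "A \<in> comp_gen E \<Longrightarrow> B \<in> comp_gen E \<Longrightarrow> A \<inter> B \<noteq> {} \<Longrightarrow> A \<inter> B \<in> comp_gen E"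
| cunion: "finite S \<Longrightarrow> S \<noteq> {} \<Longrightarrow> (\<forall>A\<in>S. A \<in> comp_gen E) \<Longrightarrow> connected_family S
           \<Longrightarrow> \<Union>S \<in> comp_gen E"

text \<open>Edge set of the completion (no repeated edges, so a set).\<close>
definition Comp :: "'a set \<Rightarrow> 'a set multiset \<Rightarrow> 'a set set" where
  "Comp V E = {V} \<union> {{v} | v. v \<in> V} \<union> {X \<in> comp_gen E. X \<subset> V}"

definition basis :: "'a set set \<Rightarrow> 'a set set" where
  "basis K = {X \<in> K. card X > 1 \<and>
     \<not> (\<exists>S. finite S \<and> S \<noteq> {} \<and> S \<subseteq> {Y \<in> K. Y \<subset> X} \<and> connected_family S \<and> \<Union>S = X)}"

end

theory Submission
  imports Defs
begin



lemma walk_of_rtrancl: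
  assumes "(x,y) \<in> (adj_in T S)\<^sup>*" "x \<in> S"
  shows "\<exists>xs. xs \<noteq> [] \<and> hd xs = x \<and> last xs = y \<and> set xs \<subseteq> S \<and> successively (\<lambda>a b. {a,b} \<in> T) xs"
  using assms(1)
proof (induction rule: rtrancl_induct)
  case base
  then show ?case using assms(2) by (intro exI[of _ "[x]"]) auto
next
  case (step y z)
  then obtain xs where xs: "xs \<noteq> []" "hd xs = x" "last xs = y" "set xs \<subseteq> S" "successively (\<lambda>a b. {a,b} \<in> T) xs" by blast
  show ?case
    apply (rule exI[of _ "xs @ [z]"])
    using xs step(2) by (auto simp: successively_append_iff adj_in_def)
qed

lemma rtrancl_of_walk:
  assumes "successively (\<lambda>a b. {a,b} \<in> T) xs" "xs \<noteq> []" "set xs \<subseteq> S"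
  shows "(hd xs, last xs) \<in> (adj_in T S)\<^sup>*"
  using assms
proof (induction xs)
  case Nil
  then show ?case by simp
next
  case (Cons a xs)
  show ?case
  proof (cases "xs = []")
    case True
    then show ?thesis by simp
  next
    case False
    have "(a, hd xs) \<in> adj_in T S" using Cons.prems False
      by (cases xs) (auto simp: adj_in_def)
    moreover have "(hd xs, last xs) \<in> (adj_in T S)\<^sup>*"
      using Cons False by (auto simp: successively_Cons)
    ultimately show ?thesis using False
      by (auto intro: converse_rtrancl_into_rtrancl)
  qed
qed

lemma walk_shorten:
  assumes "successively P xs" "xs \<noteq> []"
  shows "\<exists>ys. distinct ys \<and> ys \<noteq> [] \<and> hd ys = hd xs \<and> last ys = last xs \<and> set ys \<subseteq> set xs \<and> successively P ys"
  using assms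
proof (induction xs rule: length_induct)
  case (1 xs)
  show ?case
  proof (cases "distinct xs")
    case True
    then show ?thesis using 1 by blast
  next
    case False
    then obtain p m q z where d: "xs = p @ [z] @ m @ [z] @ q" using not_distinct_decomp by blast
    define xs' where "xs' = p @ [z] @ q"
    have len: "length xs' < length xs" using d xs'_def by simp
    have h: "successively P ((p @ [z] @ m) @ (z#q))" using "1.prems"(1) d by simp
    hence h1: "successively P (z#q)" and h2: "successively P ((p @ [z]) @ m)"
      using successively_append_iff by (metis append.assoc)+
    hence h3: "successively P (p @ [z])" using successively_append_iff by blast
    have s: "successively P xs'" unfolding xs'_def using h1 h3
      using successively_append_iff[of P "p @ [z]" q]
      by (cases q) (auto simp: successively_Cons)
    have ne: "xs' \<noteq> []" by (simp add: xs'_def)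
    have hd: "hd xs' = hd xs" using d xs'_def by (cases p) auto
    have lt: "last xs' = last xs" using d xs'_def by (cases q) auto
    have st: "set xs' \<subseteq> set xs" using d xs'_def by auto
    from "1.IH" len s ne obtain ys where "distinct ys \<and> ys \<noteq> [] \<and> hd ys = hd xs' \<and> last ys = last xs' \<and> set ys \<subseteq> set xs' \<and> successively P ys"
      by blast
    then show ?thesis using hd lt st by (intro exI[of _ ys]) auto
  qed
qed


lemma graph_edge_neq:
  assumes "graph_edges V T" "{a,z} \<in> T"
  shows "a \<noteq> z"
proof
  assume "a = z"
  then obtain u v where "{a} = {u,v}" "u \<noteq> v" using assms unfolding graph_edges_def by force
  then show False by (metis doubleton_eq_iff insert_absorb2)
qed


lemma bridge:
  assumes ge: "graph_edges V T" and nc: "\<not>(\<exists>xs. is_cycle T xs)" and e: "{a,z} \<in> T"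
    and p: "(a,z) \<in> (adj_in (T - {{a,z}}) UNIV)\<^sup>*"
  shows False
proof -
  have az: "a \<noteq> z" using graph_edge_neq[OF ge e] .
  obtain xs where xs: "xs \<noteq> []" "hd xs = a" "last xs = z" "successively (\<lambda>u v. {u,v} \<in> T - {{a,z}}) xs"
    using walk_of_rtrancl[OF p] by blast
  obtain ys where ys: "distinct ys" "ys \<noteq> []" "hd ys = a" "last ys = z" "successively (\<lambda>u v. {u,v} \<in> T - {{a,z}}) ys"
    using walk_shorten[OF xs(4) xs(1)] xs by metis
  have len: "length ys \<ge> 3"
  proof (rule ccontr)
    assume "\<not> 3 \<le> length ys"
    moreover have "length ys > 0" using ys(2) by simp
    ultimately have "length ys = 1 \<or> length ys = 2" by linarith
    then show False
    proof
      assume "length ys = 1"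
      then obtain w where "ys = [w]" by (cases ys) auto
      then show False using ys az by simp
    next
      assume "length ys = 2"
      then obtain w w' where "ys = [w, w']" by (cases ys; cases "tl ys") auto
      then show False using ys by simp
    qed
  qed
  have "successively (\<lambda>u v. {u,v} \<in> T) ys"
    using ys(5) by (rule successively_mono) auto
  then have "is_cycle T ys" unfolding is_cycle_def
    using len ys e by (auto simp: successively_conv_nth insert_commute)
  then show False using nc by blast
qed



lemma rtrancl_adj_in_mem:
  assumes "(x,y) \<in> (adj_in T B)\<^sup>*" "x \<in> B"
  shows "y \<in> B"
  using assms by (induction rule: rtrancl_induct) (auto simp: adj_in_def)

lemma path_in_every_walk:
  assumes ge: "graph_edges V T" and nc: "\<not>(\<exists>xs. is_cycle T xs)"
    and xs: "distinct xs" "xs \<noteq> []" "successively (\<lambda>a b. {a,b} \<in> T) xs" "hd xs = x" "last xs = y"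
    and w: "(x,y) \<in> (adj_in T B)\<^sup>*" and xB: "x \<in> B"
  shows "set xs \<subseteq> B"
proof
  fix w assume wx: "w \<in> set xs"
  show "w \<in> B"
  proof (rule ccontr)
    assume wB: "w \<notin> B"
    obtain p r where pr: "xs = p @ w # r" using split_list[OF wx] by blast
    have pne: "p \<noteq> []" using pr xs(4) xB wB by auto
    define a where "a = last p"
    define R' where "R' = adj_in (T - {{a,w}}) UNIV"
    have sub: "adj_in T B \<subseteq> R'" unfolding R'_def adj_in_def using wB
      by (auto simp: doubleton_eq_iff)
    have xy: "(x,y) \<in> R'\<^sup>*" using rtrancl_mono[OF sub] w by blast
    have sp: "successively (\<lambda>a b. {a,b} \<in> T) p" and sr: "successively (\<lambda>a b. {a,b} \<in> T) (w#r)"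
      and ea: "{a, w} \<in> T"
      using xs(3) pne unfolding pr a_def by (auto simp: successively_append_iff)
    have dpr: "set p \<inter> set (w#r) = {}" using xs(1) pr by auto
    have "successively (\<lambda>u v. {u,v} \<in> T - {{a,w}}) p"
      using sp apply (rule successively_mono)
      using dpr by (auto simp: doubleton_eq_iff)
    then have xa: "(x,a) \<in> R'\<^sup>*" using rtrancl_of_walk[of "T - {{a,w}}" p UNIV] pne xs(4) pr
      unfolding R'_def a_def by auto
    have "a \<in> set p" using pne a_def by simp
    have "successively (\<lambda>u v. {u,v} \<in> T - {{a,w}}) (w#r)"
      using sr apply (rule successively_mono)
      using dpr \<open>a \<in> set p\<close> by (auto simp: doubleton_eq_iff)
    then have wy: "(w,y) \<in> R'\<^sup>*" using rtrancl_of_walk[of "T - {{a,w}}" "w#r" UNIV] xs(5) pr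
      unfolding R'_def by auto
    have symR: "sym (R'\<^sup>*)" unfolding R'_def
      by (rule sym_rtrancl) (auto simp: sym_def adj_in_def insert_commute)
    have "(a,w) \<in> R'\<^sup>*"
      using symD[OF symR xa] xy symD[OF symR wy] by (meson rtrancl_trans)
    then show False using bridge[OF ge nc ea] unfolding R'_def by blast
  qed
qed





lemma inter_conn:
  assumes ge: "graph_edges V T" and nc: "\<not>(\<exists>xs. is_cycle T xs)"
    and A: "induces_connected T A" and B: "induces_connected T B"
  shows "induces_connected T (A \<inter> B)"
  unfolding induces_connected_def
proof (intro ballI)
  fix x y assume x: "x \<in> A \<inter> B" and y: "y \<in> A \<inter> B"
  have xA: "x \<in> A" and xB: "x \<in> B" and yA: "y \<in> A" and yB: "y \<in> B" using x y by auto
  have "(x,y) \<in> (adj_in T A)\<^sup>*" using A xA yA unfolding induces_connected_def by blast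
  from walk_of_rtrancl[OF this xA] obtain xs where xs: "xs \<noteq> []" "hd xs = x" "last xs = y" "set xs \<subseteq> A" "successively (\<lambda>a b. {a,b} \<in> T) xs"
    by blast
  obtain ys where ys0: "distinct ys \<and> ys \<noteq> [] \<and> hd ys = hd xs \<and> last ys = last xs \<and> set ys \<subseteq> set xs \<and> successively (\<lambda>a b. {a,b} \<in> T) ys"
    using walk_shorten[OF xs(5) xs(1)] by blast
  have ys: "distinct ys" "ys \<noteq> []" "hd ys = x" "last ys = y" "set ys \<subseteq> A" "successively (\<lambda>a b. {a,b} \<in> T) ys"
    using ys0 xs by auto
  have "(x,y) \<in> (adj_in T B)\<^sup>*" using B xB yB unfolding induces_connected_def by blast
  from path_in_every_walk[OF ge nc ys(1,2,6,3,4) this xB] have "set ys \<subseteq> B" .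
  then have "set ys \<subseteq> A \<inter> B" using ys(5) by blast
  from rtrancl_of_walk[OF ys(6,2) this] show "(x,y) \<in> (adj_in T (A \<inter> B))\<^sup>*"
    using ys(3,4) by simp
qed


lemma adj_in_mono: "A \<subseteq> B \<Longrightarrow> (adj_in T A)\<^sup>* \<subseteq> (adj_in T B)\<^sup>*"
  by (rule rtrancl_mono) (auto simp: adj_in_def)

lemma union_conn:
  assumes cf: "connected_family S" and c: "\<forall>A\<in>S. induces_connected T A"
  shows "induces_connected T (\<Union>S)"
  unfolding induces_connected_def
proof (intro ballI)
  fix x y assume "x \<in> \<Union>S" "y \<in> \<Union>S"
  then obtain X Y where X: "X \<in> S" "x \<in> X" and Y: "Y \<in> S" "y \<in> Y" by blast
  have XY: "(X,Y) \<in> {(X, Y). X \<in> S \<and> Y \<in> S \<and> X \<inter> Y \<noteq> {}}\<^sup>*" using cf X Y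
    unfolding connected_family_def by blast
  have "\<forall>y\<in>Y. (x,y) \<in> (adj_in T (\<Union>S))\<^sup>*"
    using XY
  proof (induction rule: rtrancl_induct)
    case base
    then show ?case using c X adj_in_mono[of X "\<Union>S" T] unfolding induces_connected_def by blast
  next
    case (step Y Z)
    then obtain w where w: "w \<in> Y" "w \<in> Z" and Z: "Z \<in> S" by blast
    have "\<forall>z\<in>Z. (w,z) \<in> (adj_in T (\<Union>S))\<^sup>*"
      using c Z w adj_in_mono[of Z "\<Union>S" T] unfolding induces_connected_def by blast
    then show ?case using step.IH w by (meson rtrancl_trans)
  qed
  then show "(x,y) \<in> (adj_in T (\<Union>S))\<^sup>*" using Y by blast
qed




lemma comp_gen_conn:
  assumes t: "is_tree V T" and b: "\<forall>F\<in>#E. induces_connected T F" and X: "X \<in> comp_gen E"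
  shows "induces_connected T X"
  using X
proof (induction rule: comp_gen.induct)
  case (base F)
  then show ?case using b by blast
next
  case (inter A B)
  then show ?case using inter_conn t unfolding is_tree_def by blast
next
  case (cunion S)
  then show ?case using union_conn by blast
qed

lemma small_conn:
  assumes "finite X" "card X \<le> 1"
  shows "induces_connected T X"
proof -
  have "\<forall>x\<in>X. \<forall>y\<in>X. x = y" using card_le_Suc0_iff_eq[OF assms(1)] assms(2) by simp
  then show ?thesis unfolding induces_connected_def by auto
qed

lemma Comp_sub: "X \<in> Comp V E \<Longrightarrow> X \<subseteq> V"
  unfolding Comp_def by auto

lemma E_sub_Comp: "hypergraph V E \<Longrightarrow> set_mset E \<subseteq> Comp V E"
  unfolding Comp_def hypergraph_def by (auto intro: comp_gen.base)

lemma basis_sub: "basis K \<subseteq> K"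
  unfolding basis_def by auto

lemma host_mono: "host_tree V Es T \<Longrightarrow> Es' \<subseteq> Es \<Longrightarrow> host_tree V Es' T"
  unfolding host_tree_def by blast

lemma hyper_mono: "is_hypertree V Es \<Longrightarrow> Es' \<subseteq> Es \<Longrightarrow> is_hypertree V Es'"
  unfolding is_hypertree_def using host_mono by blast

lemma E_to_Comp:
  assumes h: "hypergraph V E" and ht: "host_tree V (set_mset E) T"
  shows "host_tree V (Comp V E) T"
proof -
  have t: "is_tree V T" and b: "\<forall>F\<in>#E. induces_connected T F" using ht unfolding host_tree_def by auto
  have "induces_connected T X" if XC: "X \<in> Comp V E" for X
  proof -
    consider "X = V" | v where "X = {v}" | "X \<in> comp_gen E" using XC unfolding Comp_def by blast
    then show ?thesis
    proof cases
      case 1 then show ?thesis using t unfolding is_tree_def by simp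
    next
      case 2 then show ?thesis by (intro small_conn) auto
    next
      case 3 then show ?thesis using comp_gen_conn[OF t b] by blast
    qed
  qed
  then show ?thesis using t unfolding host_tree_def by blast
qed


lemma basis_to_Comp:
  assumes h: "hypergraph V E" and ht: "host_tree V (basis (Comp V E)) T"
  shows "host_tree V (Comp V E) T"
proof -
  have t: "is_tree V T" and b: "\<forall>F\<in>basis (Comp V E). induces_connected T F"
    using ht unfolding host_tree_def by auto
  have fV: "finite V" using h unfolding hypergraph_def by blast
  have "\<forall>X. card X = n \<longrightarrow> X \<in> Comp V E \<longrightarrow> induces_connected T X" for n
  proof (induction n rule: less_induct)
    case (less n)
    show ?case
    proof (intro allI impI)
      fix X assume cX: "card X = n" and X: "X \<in> Comp V E"
      have fX: "finite X" using Comp_sub[OF X] fV finite_subset by blast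
      show "induces_connected T X"
      proof (cases "card X \<le> 1")
        case True
        then show ?thesis using small_conn fX by blast
      next
        case False
        show ?thesis
        proof (cases "X \<in> basis (Comp V E)")
          case True
          then show ?thesis using b by blast
        next
          case nb: False
          then obtain S where S: "finite S" "S \<noteq> {}" "S \<subseteq> {Y \<in> Comp V E. Y \<subset> X}"
            "connected_family S" "\<Union>S = X"
            using False X unfolding basis_def by auto
          have "\<forall>A\<in>S. induces_connected T A"
          proof
            fix A assume A: "A \<in> S"
            then have "A \<in> Comp V E" "A \<subset> X" using S(3) by auto
            moreover have "card A < n" using cX fX \<open>A \<subset> X\<close> psubset_card_mono by blast
            ultimately show "induces_connected T A" using less by blast
          qed
          then show ?thesis using union_conn[OF S(4)] S(5) by blast
        qed
      qed
    qed
  qed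
  then have "\<forall>X\<in>Comp V E. induces_connected T X" by blast
  then show ?thesis using t unfolding host_tree_def by blast
qed

theorem mainTheorem2:
  fixes V :: "'a set" and E :: "'a set multiset"
  assumes "hypergraph V E"
  shows "(is_hypertree V (set_mset E) \<longleftrightarrow> is_hypertree V (Comp V E))
       \<and> (is_hypertree V (set_mset E) \<longleftrightarrow> is_hypertree V (basis (Comp V E)))"
proof -
  have a: "is_hypertree V (set_mset E) \<Longrightarrow> is_hypertree V (Comp V E)"
    using E_to_Comp[OF assms] unfolding is_hypertree_def by blast
  have b: "is_hypertree V (Comp V E) \<Longrightarrow> is_hypertree V (set_mset E)"
    using hyper_mono E_sub_Comp[OF assms] by blast
  have c: "is_hypertree V (Comp V E) \<Longrightarrow> is_hypertree V (basis (Comp V E))"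
    using hyper_mono basis_sub by blast
  have d: "is_hypertree V (basis (Comp V E)) \<Longrightarrow> is_hypertree V (Comp V E)"
    using basis_to_Comp[OF assms] unfolding is_hypertree_def by blast
  show ?thesis using a b c d by blast
qed

end
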